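(* Let $I\subseteq\mathbb{R}$ be an interval containing $0$ and let $f:I\to\mathbb{R}$ be such that $f|_{I\cap[0,\infty)}$ is convex and $f(-x)=-f(x)$ whenever $x$ and $-x$ both belong to $I$. Then for every family of points $a_1,\dots,a_n\in I$ and every family of weights $p_1,\dots,p_n\in[0,\infty)$ with $\sum_{k=1}^n p_k=1$ and \[ \sum_{k=1}^n p_k a_k+\min\{a_1,\dots,a_n\}\ge0, \] we have \[ f\left(\sum_{k=1}^n p_k a_k\right)\le\sum_{k=1}^n p_k f(a_k). \] *)

theory Defs
  imports "HOL-Analysis.Analysis"
begin

end

theory Submission
  imports Defs
begin

theorem corollary2:
  fixes I :: "real set" and f :: "real \<Rightarrow> real"
    and n :: nat and a p :: "nat \<Rightarrow> real"
  assumes I_int: "is_interval I" and I0: "0 \<in> I"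
    and f_conv: "convex_on (I \<inter> {0..}) f"
    and f_odd: "\<And>x. x \<in> I \<Longrightarrow> - x \<in> I \<Longrightarrow> f (- x) = - f x"
    and a_I: "\<And>k. k \<in> {1..n} \<Longrightarrow> a k \<in> I"
    and p_nonneg: "\<And>k. k \<in> {1..n} \<Longrightarrow> p k \<ge> 0"
    and p_sum: "(\<Sum>k=1..n. p k) = 1"
    and cond: "(\<Sum>k=1..n. p k * a k) + Min (a ` {1..n}) \<ge> 0"
  shows "f (\<Sum>k=1..n. p k * a k) \<le> (\<Sum>k=1..n. p k * f (a k))"
proof -
  define C where "C = I \<inter> {0..}"
  define s where "s = (\<Sum>k=1..n. p k * a k)"
  define m where "m = Min (a ` {1..n})"
  define P where "P = {k\<in>{1..n}. a k \<ge> 0}"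
  define N where "N = {k\<in>{1..n}. a k < 0}"
  define q where "q = (\<Sum>k\<in>P. p k)"
  define r where "r = (\<Sum>k\<in>N. p k)"
  define u where "u = (\<Sum>k\<in>P. p k * a k)"
  have convI: "convex I" using I_int is_interval_convex_1 by blast
  have convC: "convex C" unfolding C_def using convI convex_Int convex_real_interval(1) by blast
  have f0: "f 0 = 0" using f_odd[of 0] I0 by simp
  have n1: "n \<ge> 1" using p_sum by (cases n) auto
  have fin: "finite P" "finite N" unfolding P_def N_def by auto
  have PN: "P \<inter> N = {}" "P \<union> N = {1..n}" unfolding P_def N_def by auto
  have split: "(\<Sum>k=1..n. g k) = (\<Sum>k\<in>P. g k) + (\<Sum>k\<in>N. g k)" for g :: "nat \<Rightarrow> real"
    using sum.union_disjoint[OF fin PN(1), of g] PN(2) by simp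
  have qr: "q + r = 1" using split[of p] p_sum q_def r_def by simp
  have q0: "q \<ge> 0" "r \<ge> 0" using p_nonneg unfolding q_def r_def P_def N_def
    by (auto intro!: sum_nonneg)
  have mle: "m \<le> a k" if "k \<in> {1..n}" for k unfolding m_def using that by simp
  have "(\<Sum>k=1..n. p k * m) \<le> s" unfolding s_def
    using mle p_nonneg by (auto intro!: sum_mono mult_left_mono)
  hence sm: "m \<le> s" using p_sum by (simp add: sum_distrib_right[symmetric])
  have scond: "s + m \<ge> 0" using cond s_def m_def by simp
  have s0: "s \<ge> 0" using sm scond by linarith
  have sI: "s \<in> I" unfolding s_def using convex_sum[OF _ convI p_sum, of a] p_nonneg a_I by simp
  have sC: "s \<in> C" using sI s0 C_def by simp
  have bC: "- a k \<in> C" if "k \<in> N" for k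
  proof -
    have "0 < - a k" "- a k \<le> s" using that mle[of k] scond N_def by auto
    note ak = this
    have II: "\<forall>x\<in>I. \<forall>y\<in>I. \<forall>z. x \<le> z \<and> z \<le> y \<longrightarrow> z \<in> I"
      using I_int is_interval_1 by blast
    have "- a k \<in> I" using II[rule_format, OF I0 sI, of "- a k"] ak by linarith
    thus ?thesis using \<open>0 < - a k\<close> C_def by simp
  qed
  have aC: "a k \<in> C" if "k \<in> P" for k using that a_I C_def P_def by auto
  have fodd: "f (a k) = - f (- a k)" if "k \<in> N" for k
    using f_odd[of "- a k"] bC[OF that] a_I that N_def C_def by auto
  have sdec: "s = u + (\<Sum>k\<in>N. p k * a k)" unfolding s_def u_def by (rule split)
  have star: "f (t * x) \<le> t * f x" if "0 \<le> t" "t \<le> 1" "x \<in> C" for t x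
  proof -
    have "0 \<in> C" using I0 C_def by simp
    have "f ((1 - t) * 0 + t * x) \<le> (1 - t) * f 0 + t * f x"
      using convex_onD[OF f_conv[folded C_def], of t 0 x] that \<open>0 \<in> C\<close> by simp
    thus ?thesis using f0 by simp
  qed
  show ?thesis
  proof (cases "s = 0")
    case True
    have "N = {}"
    proof (rule ccontr)
      assume "N \<noteq> {}"
      then obtain k where k: "k \<in> N" by blast
      have "0 < - a k" "- a k \<le> s" using k mle[of k] scond N_def by auto
      thus False using True by simp
    qed
    hence PP: "P = {1..n}" using PN by simp
    have ne: "{1..n} \<noteq> {}" using n1 by simp
    have "f (\<Sum>k=1..n. p k *\<^sub>R a k) \<le> (\<Sum>k=1..n. p k * f (a k))"
      by (rule convex_on_sum[OF _ ne f_conv[folded C_def] p_sum]) (use p_nonneg aC PP in auto)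
    thus ?thesis by simp
  next
    case False
    hence spos: "s > 0" using s0 by simp
    define T where "T = insert 0 (a ` {k\<in>P. a k < s})"
    define sl where "sl = (\<lambda>x. (f s - f x) / (s - x))"
    define L where "L = Max (sl ` T)"
    have finT: "finite T" unfolding T_def using fin by simp
    have TC: "x \<in> C" "x < s" if "x \<in> T" for x
      using that aC spos I0 C_def unfolding T_def by auto
    have Lge: "sl x \<le> L" if "x \<in> T" for x unfolding L_def using finT that by simp
    obtain x0 where x0: "x0 \<in> T" "L = sl x0"
      unfolding L_def using finT Max_in[of "sl ` T"] T_def by auto
    have L0: "f s / s \<le> L" using Lge[of 0] T_def f0 sl_def by simp
    have Pk: "f s + L * (a k - s) \<le> f (a k)" if "k \<in> P" for k
    proof (cases "a k" s rule: linorder_cases)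
      case less
      hence "a k \<in> T" using that T_def by auto
      hence "(f s - f (a k)) / (s - a k) \<le> L" using Lge sl_def by simp
      hence "f s - f (a k) \<le> L * (s - a k)" using less by (simp add: pos_divide_le_eq)
      thus ?thesis by (simp add: algebra_simps)
    next
      case equal
      thus ?thesis by simp
    next
      case greater
      have "(f x0 - f s) / (x0 - s) \<le> (f x0 - f (a k)) / (x0 - a k)"
           "(f x0 - f (a k)) / (x0 - a k) \<le> (f s - f (a k)) / (s - a k)"
        using convex_on_slope_le[OF f_conv[folded C_def] TC(1)[OF x0(1)] aC[OF that], of s]
          TC(2)[OF x0(1)] greater by auto
      moreover have "sl x0 = (f x0 - f s) / (x0 - s)" unfolding sl_def
        by (metis minus_diff_eq minus_divide_divide)
      moreover have "(f s - f (a k)) / (s - a k) = (f (a k) - f s) / (a k - s)"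
        by (metis minus_diff_eq minus_divide_divide)
      ultimately have "L \<le> (f (a k) - f s) / (a k - s)" using x0 by simp
      hence "L * (a k - s) \<le> f (a k) - f s" using greater by (simp add: pos_le_divide_eq)
      thus ?thesis by simp
    qed
    have Nk: "(a k / s) * f s \<le> f (a k)" if "k \<in> N" for k
    proof -
      have "0 < - a k" "- a k \<le> s" using that mle[of k] scond N_def by auto
      hence t0: "0 \<le> - a k / s" and t1: "- a k / s \<le> 1" using spos
        by (auto simp: pos_divide_le_eq pos_le_divide_eq)
      have "f ((- a k / s) * s) \<le> (- a k / s) * f s"
        using star[OF t0 t1 sC] .
      hence "f (- a k) \<le> (- a k / s) * f s" using spos by simp
      thus ?thesis using fodd[OF that] by simp
    qed
    have sP: "(\<Sum>k\<in>P. p k * (f s + L * (a k - s))) \<le> (\<Sum>k\<in>P. p k * f (a k))"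
      using Pk p_nonneg P_def by (auto intro!: sum_mono mult_left_mono)
    have sN: "(\<Sum>k\<in>N. p k * ((a k / s) * f s)) \<le> (\<Sum>k\<in>N. p k * f (a k))"
    proof (rule sum_mono)
      fix k assume k: "k \<in> N"
      have "0 \<le> p k" using p_nonneg k N_def by auto
      thus "p k * ((a k / s) * f s) \<le> p k * f (a k)" using mult_left_mono[OF Nk[OF k]] by blast
    qed
    have eP: "(\<Sum>k\<in>P. p k * (f s + L * (a k - s))) = q * f s + L * u - L * s * q"
      unfolding q_def u_def
      by (simp add: algebra_simps sum.distrib sum_distrib_left sum_distrib_right sum_subtractf)
    have eN: "(\<Sum>k\<in>N. p k * ((a k / s) * f s)) = (f s / s) * (s - u)"
    proof -
      have "(\<Sum>k\<in>N. p k * ((a k / s) * f s)) = (f s / s) * (\<Sum>k\<in>N. p k * a k)"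
        by (simp add: sum_distrib_left algebra_simps)
      thus ?thesis using sdec by simp
    qed
    have negN: "(\<Sum>k\<in>N. p k * a k) \<le> 0"
      using p_nonneg N_def by (auto intro!: sum_nonpos mult_nonneg_nonpos)
    have uqs: "u - q * s \<ge> 0"
    proof -
      have "u \<ge> s" using sdec negN by simp
      moreover have "q * s \<le> s" using qr q0 s0 by (simp add: mult_left_le_one_le)
      ultimately show ?thesis by simp
    qed
    have "(L - f s / s) * (u - q * s) \<ge> 0" using L0 uqs by simp
    moreover have "q * f s + L * u - L * s * q + (f s / s) * (s - u)
        = f s + (L - f s / s) * (u - q * s)"
      using spos qr by (simp add: field_simps)
    ultimately have "f s \<le> (\<Sum>k\<in>P. p k * f (a k)) + (\<Sum>k\<in>N. p k * f (a k))"
      using sP sN eP eN by linarith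
    thus ?thesis using split[of "\<lambda>k. p k * f (a k)"] unfolding s_def by simp
  qed
qed

end
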